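(* Let $n,d\in\mathbb{N}$, $y_1,\dots,y_n\in\{-1,+1\}$, $z_1,\dots,z_n$ in a real Hilbert space $\mathcal{Z}$, $\tilde x_1,\dots,\tilde x_n\in\mathbb{R}^d$, $C>0$, $\gamma\ge0$, and let $(w^\star,b^\star,\tilde w^\star,\tilde b^\star,\alpha^\star,\beta^\star)$ be a primal-dual optimal point of the SVM+ problem with correcting vectors $\tilde z_i=\tilde x_i$ (Euclidean inner product). Let $h_i=[1-y_i(\langle w^\star,z_i\rangle+b^\star)]_+$ and suppose $$\frac{\sum_i(\alpha^\star_i+\beta^\star_i)h_i}{\sum_i(\alpha^\star_i+\beta^\star_i)}=\frac1n\sum_ih_i .$$ Then $\langle\tilde w^\star,\tilde x_i\rangle+\tilde b^\star=h_i$ for all $i=1,\dots,n$. Furthermore: (1) if $\gamma>0$, then $\tilde w^\star=0$ and $\tilde b^\star=h_i$ for all $i$ (so the loss $h_i$ is the same at all data points); (2) if $\gamma=0$, then $\tilde X\tilde\alpha^\star=0$, where $\tilde X=[\tilde x_1\cdots\tilde x_n]\in\mathbb{R}^{d\times n}$ and $\tilde\alpha^\star=\alpha^\star+\beta^\star-C\mathbf 1$; if additionally $\operatorname{rank}(\tilde X)=n$, then $\alpha^\star_i+\beta^\star_i=C$ for all $i$, every vector of $\mathbb{R}^n$ is of the form $(\langle\tilde w,\tilde x_i\rangle+\tilde b)_{i=1}^n$ for some $\tilde w\in\mathbb{R}^d,\tilde b\in\mathbb{R}$, and $(w^\star,b^\star,\xi^\star,\alpha^\star,\beta^\star)$ with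 $\xi^\star_i=\langle\tilde w^\star,\tilde x_i\rangle+\tilde b^\star$ is a primal-dual optimal point of the standard soft-margin SVM with parameter $C$.
   Context: SVM+ problem: $\min_{w\in\mathcal Z,b\in\mathbb R,\tilde w\in\mathbb R^d,\tilde b\in\mathbb R}\frac12(\|w\|^2+\gamma\|\tilde w\|^2)+C\sum_i(\langle\tilde w,\tilde x_i\rangle+\tilde b)$ subject to $y_i(\langle w,z_i\rangle+b)\ge1-(\langle\tilde w,\tilde x_i\rangle+\tilde b)$ and $\langle\tilde w,\tilde x_i\rangle+\tilde b\ge0$; primal-dual optimal points satisfy the KKT conditions $w=\sum_i\alpha_iy_iz_i$, $\sum_i\alpha_iy_i=0$, $\sum_i(\alpha_i+\beta_i-C)\tilde x_i=\gamma\tilde w$, $\sum_i(\alpha_i+\beta_i-C)=0$, $\alpha_i[\langle\tilde w,\tilde x_i\rangle+\tilde b-1+y_i(\langle w,z_i\rangle+b)]=0$, $\beta_i[\langle\tilde w,\tilde x_i\rangle+\tilde b]=0$, primal feasibility, $\alpha,\beta\ge0$. The standard soft-margin SVM with parameter $C$ is $\min_{w,b,\xi}\frac12\|w\|^2+C\sum_i\xi_i$ subject to $y_i(\langle w,z_i\rangle+b)\ge1-\xi_i$, $\xi_i\ge0$; its primal-dual optimal points $(w,b,\xi,\alpha,\beta)$ satisfy $w=\sum_i\alpha_iy_iz_i$, $\sum_i\alpha_iy_i=0$, $\alpha_i+\beta_i=C$, $\alpha_i[\xi_i-1+y_i(\langle w,z_i\rangle+b)]=0$, $\beta_i\xi_i=0$,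 primal feasibility, $\alpha,\beta\ge0$. $\mathbf 1$ is the all-ones vector. *)

theory Defs
  imports "HOL-Analysis.Analysis"
begin

text \<open>Primal-dual optimal points of the SVM+ problem (correcting vectors xt i in R^d,
  Euclidean inner product), characterised by the KKT system given in the paper.
  Data are indexed by a finite type 'n (so n = CARD('n)).\<close>

definition svmplus_pd_optimal ::
  "real \<Rightarrow> real \<Rightarrow> ('n::finite \<Rightarrow> real) \<Rightarrow> ('n \<Rightarrow> 'z::real_inner) \<Rightarrow> ('n \<Rightarrow> real^'d)
   \<Rightarrow> 'z \<Rightarrow> real \<Rightarrow> real^'d \<Rightarrow> real \<Rightarrow> ('n \<Rightarrow> real) \<Rightarrow> ('n \<Rightarrow> real) \<Rightarrow> bool" where
  "svmplus_pd_optimal C \<gamma> y z xt w b wt bt \<alpha> \<beta> \<longleftrightarrow>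
     w = (\<Sum>i\<in>UNIV. (\<alpha> i * y i) *\<^sub>R z i) \<and>
     (\<Sum>i\<in>UNIV. \<alpha> i * y i) = 0 \<and>
     (\<Sum>i\<in>UNIV. (\<alpha> i + \<beta> i - C) *\<^sub>R xt i) = \<gamma> *\<^sub>R wt \<and>
     (\<Sum>i\<in>UNIV. \<alpha> i + \<beta> i - C) = 0 \<and>
     (\<forall>i. \<alpha> i * (wt \<bullet> xt i + bt - 1 + y i * (w \<bullet> z i + b)) = 0) \<and>
     (\<forall>i. \<beta> i * (wt \<bullet> xt i + bt) = 0) \<and>
     (\<forall>i. y i * (w \<bullet> z i + b) \<ge> 1 - (wt \<bullet> xt i + bt)) \<and>
     (\<forall>i. wt \<bullet> xt i + bt \<ge> 0) \<and>
     (\<forall>i. \<alpha> i \<ge> 0 \<and> \<beta> i \<ge> 0)"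

definition svm_pd_optimal ::
  "real \<Rightarrow> ('n::finite \<Rightarrow> real) \<Rightarrow> ('n \<Rightarrow> 'z::real_inner)
   \<Rightarrow> 'z \<Rightarrow> real \<Rightarrow> ('n \<Rightarrow> real) \<Rightarrow> ('n \<Rightarrow> real) \<Rightarrow> ('n \<Rightarrow> real) \<Rightarrow> bool" where
  "svm_pd_optimal C y z w b \<xi> \<alpha> \<beta> \<longleftrightarrow>
     w = (\<Sum>i\<in>UNIV. (\<alpha> i * y i) *\<^sub>R z i) \<and>
     (\<Sum>i\<in>UNIV. \<alpha> i * y i) = 0 \<and>
     (\<forall>i. \<alpha> i + \<beta> i = C) \<and>
     (\<forall>i. \<alpha> i * (\<xi> i - 1 + y i * (w \<bullet> z i + b)) = 0) \<and>
     (\<forall>i. \<beta> i * \<xi> i = 0) \<and>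
     (\<forall>i. y i * (w \<bullet> z i + b) \<ge> 1 - \<xi> i) \<and>
     (\<forall>i. \<xi> i \<ge> 0) \<and>
     (\<forall>i. \<alpha> i \<ge> 0 \<and> \<beta> i \<ge> 0)"

definition corr_matrix :: "('n::finite \<Rightarrow> real^'d::finite) \<Rightarrow> real^'n^'d" where
  "corr_matrix xt = (\<chi> k i. xt i $ k)"

end

theory Submission
  imports Defs
begin

theorem proposition4:
  fixes C \<gamma> :: real
    and y :: "'n::finite \<Rightarrow> real"
    and z :: "'n \<Rightarrow> 'z::{real_inner,complete_space}"
    and xt :: "'n \<Rightarrow> real^'d::finite"
    and w :: 'z and b :: real and wt :: "real^'d" and bt :: real
    and \<alpha> \<beta> :: "'n \<Rightarrow> real"
    and h :: "'n \<Rightarrow> real"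
  assumes y: "\<forall>i. y i \<in> {-1, 1}"
    and C: "C > 0" and \<gamma>: "\<gamma> \<ge> 0"
    and opt: "svmplus_pd_optimal C \<gamma> y z xt w b wt bt \<alpha> \<beta>"
    and h_def: "\<forall>i. h i = max 0 (1 - y i * (w \<bullet> z i + b))"
    and avg: "(\<Sum>i\<in>UNIV. (\<alpha> i + \<beta> i) * h i) / (\<Sum>i\<in>UNIV. \<alpha> i + \<beta> i)
              = (1 / real CARD('n)) * (\<Sum>i\<in>UNIV. h i)"
  shows "(\<forall>i. wt \<bullet> xt i + bt = h i)
     \<and> (\<gamma> > 0 \<longrightarrow> wt = 0 \<and> (\<forall>i. bt = h i))
     \<and> (\<gamma> = 0 \<longrightarrow>
          corr_matrix xt *v (\<chi> i. \<alpha> i + \<beta> i - C) = 0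
          \<and> (rank (corr_matrix xt) = CARD('n) \<longrightarrow>
               (\<forall>i. \<alpha> i + \<beta> i = C)
               \<and> (\<forall>v :: real^'n. \<exists>wt' :: real^'d. \<exists>bt' :: real. \<forall>i. v $ i = wt' \<bullet> xt i + bt')
               \<and> svm_pd_optimal C y z w b (\<lambda>i. wt \<bullet> xt i + bt) \<alpha> \<beta>))"
proof -
  define \<xi> where "\<xi> i = wt \<bullet> xt i + bt" for i
  define s where "s i = \<alpha> i + \<beta> i" for i
  note O = opt[unfolded svmplus_pd_optimal_def]
  have ge: "\<xi> i \<ge> h i" for i
  proof -
    have "\<xi> i \<ge> 0" "y i * (w \<bullet> z i + b) \<ge> 1 - \<xi> i" using O unfolding \<xi>_def by blast+
    moreover have "h i = max 0 (1 - y i * (w \<bullet> z i + b))" using h_def by blast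
    ultimately show ?thesis by linarith
  qed
  have h0: "h i \<ge> 0" for i using h_def by simp
  have sx: "s i * \<xi> i = s i * h i" for i
  proof -
    have a1: "\<alpha> i * (\<xi> i - 1 + y i * (w \<bullet> z i + b)) = 0" using O unfolding \<xi>_def by blast
    have a2: "\<beta> i * \<xi> i = 0" using O unfolding \<xi>_def by blast
    have a3: "\<xi> i \<ge> 0" using O unfolding \<xi>_def by blast
    have hi: "h i = max 0 (1 - y i * (w \<bullet> z i + b))" using h_def by blast
    have e1: "\<alpha> i * \<xi> i = \<alpha> i * h i"
    proof (cases "\<alpha> i = 0")
      case True then show ?thesis by simp
    next
      case False
      then have e: "\<xi> i - 1 + y i * (w \<bullet> z i + b) = 0" using a1 by simp
      then have "h i = \<xi> i" using hi a3 by linarith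
      then show ?thesis by simp
    qed
    have e2: "\<beta> i * \<xi> i = \<beta> i * h i"
    proof (cases "\<beta> i = 0")
      case True then show ?thesis by simp
    next
      case False
      then have "\<xi> i = 0" using a2 by simp
      then have "h i = 0" using ge[of i] h0[of i] by linarith
      then show ?thesis using \<open>\<xi> i = 0\<close> by simp
    qed
    show ?thesis unfolding s_def distrib_right e1 e2 by (rule refl)
  qed
  have sumsC: "(\<Sum>i\<in>UNIV. s i) = real CARD('n) * C"
  proof -
    have "(\<Sum>i\<in>UNIV. s i - C) = 0" using O unfolding s_def by auto
    then show ?thesis by (simp add: sum_subtractf)
  qed
  have sumxi: "(\<Sum>i\<in>UNIV. (s i - C) * \<xi> i) = \<gamma> * (wt \<bullet> wt)"
  proof -
    have "(\<Sum>i\<in>UNIV. (s i - C) * \<xi> i)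
        = wt \<bullet> (\<Sum>i\<in>UNIV. (s i - C) *\<^sub>R xt i) + bt * (\<Sum>i\<in>UNIV. s i - C)"
    proof -
      have "(\<Sum>i\<in>UNIV. (s i - C) * \<xi> i) = (\<Sum>i\<in>UNIV. (s i - C) * (wt \<bullet> xt i) + bt * (s i - C))"
        unfolding \<xi>_def by (rule sum.cong) (simp_all add: distrib_left)
      also have "\<dots> = (\<Sum>i\<in>UNIV. (s i - C) * (wt \<bullet> xt i)) + bt * (\<Sum>i\<in>UNIV. s i - C)"
        by (simp add: sum.distrib sum_distrib_left)
      also have "(\<Sum>i\<in>UNIV. (s i - C) * (wt \<bullet> xt i)) = wt \<bullet> (\<Sum>i\<in>UNIV. (s i - C) *\<^sub>R xt i)"
        by (simp add: inner_sum_right)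
      finally show ?thesis .
    qed
    also have "\<dots> = \<gamma> * (wt \<bullet> wt)" using O unfolding s_def by auto
    finally show ?thesis .
  qed
  have n0: "real CARD('n) > 0" by simp
  have sh: "(\<Sum>i\<in>UNIV. s i * h i) = C * (\<Sum>i\<in>UNIV. h i)"
  proof -
    have "(\<Sum>i\<in>UNIV. s i * h i) / (real CARD('n) * C) = (1 / real CARD('n)) * (\<Sum>i\<in>UNIV. h i)"
      using avg sumsC unfolding s_def by simp
    then show ?thesis using n0 C by (simp add: field_simps)
  qed
  have "(\<Sum>i\<in>UNIV. s i * \<xi> i) = C * (\<Sum>i\<in>UNIV. \<xi> i) + \<gamma> * (wt \<bullet> wt)"
    using sumxi by (simp add: algebra_simps sum_subtractf sum_distrib_left)
  moreover have "(\<Sum>i\<in>UNIV. s i * \<xi> i) = (\<Sum>i\<in>UNIV. s i * h i)" by (rule sum.cong[OF refl sx])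
  ultimately have key: "C * (\<Sum>i\<in>UNIV. \<xi> i - h i) + \<gamma> * (wt \<bullet> wt) = 0"
    using sh by (simp add: sum_subtractf algebra_simps)
  have nn1: "0 \<le> (\<Sum>i\<in>UNIV. \<xi> i - h i)" using ge by (simp add: sum_nonneg)
  have nn2: "0 \<le> \<gamma> * (wt \<bullet> wt)" using \<gamma> by simp
  have z1: "(\<Sum>i\<in>UNIV. \<xi> i - h i) = 0"
  proof -
    have "C * (\<Sum>i\<in>UNIV. \<xi> i - h i) \<le> 0" using key nn2 by linarith
    then have "(\<Sum>i\<in>UNIV. \<xi> i - h i) \<le> 0" using C by (simp add: mult_le_0_iff)
    then show ?thesis using nn1 by linarith
  qed
  have z2: "\<gamma> * (wt \<bullet> wt) = 0" using key z1 by simp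
  have P1: "\<forall>i. \<xi> i = h i"
    using z1 ge sum_nonneg_eq_0_iff[of UNIV "\<lambda>i. \<xi> i - h i"] by simp
  have P2: "\<gamma> > 0 \<longrightarrow> wt = 0 \<and> (\<forall>i. bt = h i)"
  proof
    assume g: "\<gamma> > 0"
    then have "wt = 0" using z2 by simp
    then show "wt = 0 \<and> (\<forall>i. bt = h i)" using P1 unfolding \<xi>_def by simp
  qed
  have P3: "\<gamma> = 0 \<longrightarrow>
          corr_matrix xt *v (\<chi> i. \<alpha> i + \<beta> i - C) = 0
          \<and> (rank (corr_matrix xt) = CARD('n) \<longrightarrow>
               (\<forall>i. \<alpha> i + \<beta> i = C)
               \<and> (\<forall>v :: real^'n. \<exists>wt' :: real^'d. \<exists>bt' :: real. \<forall>i. v $ i = wt' \<bullet> xt i + bt')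
               \<and> svm_pd_optimal C y z w b (\<lambda>i. wt \<bullet> xt i + bt) \<alpha> \<beta>)"
  proof
    assume g: "\<gamma> = 0"
    have M0: "corr_matrix xt *v (\<chi> i. \<alpha> i + \<beta> i - C) = 0"
    proof -
      have "(\<Sum>i\<in>UNIV. (\<alpha> i + \<beta> i - C) *\<^sub>R xt i) = 0" using O g by simp
      then have "\<forall>k. (\<Sum>i\<in>UNIV. (\<alpha> i + \<beta> i - C) *\<^sub>R xt i) $ k = 0" by simp
      then show ?thesis
        by (simp add: vec_eq_iff matrix_vector_mult_def corr_matrix_def sum_component mult.commute)
    qed
    show "corr_matrix xt *v (\<chi> i. \<alpha> i + \<beta> i - C) = 0
          \<and> (rank (corr_matrix xt) = CARD('n) \<longrightarrow>
               (\<forall>i. \<alpha> i + \<beta> i = C)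
               \<and> (\<forall>v :: real^'n. \<exists>wt' :: real^'d. \<exists>bt' :: real. \<forall>i. v $ i = wt' \<bullet> xt i + bt')
               \<and> svm_pd_optimal C y z w b (\<lambda>i. wt \<bullet> xt i + bt) \<alpha> \<beta>)"
    proof (intro conjI M0 impI)
      assume r: "rank (corr_matrix xt) = CARD('n)"
      have "inj ((*v) (corr_matrix xt))" using r full_rank_injective by blast
      moreover have "corr_matrix xt *v 0 = 0" by simp
      ultimately have "(\<chi> i. \<alpha> i + \<beta> i - C) = (0::real^'n)" using M0 injD[of "(*v) (corr_matrix xt)"] by metis
      then show A: "\<forall>i. \<alpha> i + \<beta> i = C" by (simp add: vec_eq_iff)
      have "rank (transpose (corr_matrix xt)) = CARD('n)" using r rank_transpose by metis
      then have su: "surj ((*v) (transpose (corr_matrix xt)))" using full_rank_surjective by blast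
      show "\<forall>v :: real^'n. \<exists>wt' :: real^'d. \<exists>bt' :: real. \<forall>i. v $ i = wt' \<bullet> xt i + bt'"
      proof
        fix v :: "real^'n"
        obtain u where u: "v = transpose (corr_matrix xt) *v u" using su by blast
        have "\<forall>i. v $ i = u \<bullet> xt i + 0"
          unfolding u by (simp add: matrix_vector_mult_def transpose_def corr_matrix_def inner_vec_def mult.commute)
        then show "\<exists>wt' :: real^'d. \<exists>bt' :: real. \<forall>i. v $ i = wt' \<bullet> xt i + bt'" by blast
      qed
      show "svm_pd_optimal C y z w b (\<lambda>i. wt \<bullet> xt i + bt) \<alpha> \<beta>"
        unfolding svm_pd_optimal_def using O A by auto
    qed
  qed
  show ?thesis using P1 P2 P3 unfolding \<xi>_def by blast
qed

end
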